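(* Let $g$ be a non-trivial non-negative real-valued multiplicative function, uniformly bounded on the primes, for which the series $\sum q^{-1}g(q)$, taken over prime-powers $q=p^k$ with $k\ge2$, converges, and for which the sums $y^{-1}\sum_{q\le y}g(q)\log q$ (over all prime-powers $q\le y$) are uniformly bounded for $y\ge2$. Then \[ \sum_{u<n\le v}\frac{g(n)}{n} \ll \left(\log\Big(\frac{\log v}{\log u}\Big)+\frac{1}{\log x}\right)\sum_{n\le x}\frac{g(n)}{n} \] uniformly for $x^{1/2}\le u\le v\le x^{3/2}$, $x\ge2$.
   Context: Multiplicative means $f(mn)=f(m)f(n)$ whenever $\gcd(m,n)=1$, with $f(1)=1$. $A\ll B$ means $|A|\le KB$ for a constant $K$ (here depending on $g$ but not on $u,v,x$). *)

theory Defs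
  imports Complex_Main "HOL-Number_Theory.Prime_Powers"
begin

definition multiplicative :: "(nat \<Rightarrow> real) \<Rightarrow> bool" where
  "multiplicative f \<longleftrightarrow> f 1 = 1 \<and>
     (\<forall>m n. m > 0 \<longrightarrow> n > 0 \<longrightarrow> coprime m n \<longrightarrow> f (m * n) = f m * f n)"

end

theory Submission
  imports Defs
begin


lemma ln_decomp:
  fixes n :: nat assumes "n > 0"
  shows "ln (real n) = (\<Sum>p\<in>prime_factors n. ln (real (p ^ multiplicity p n)))"
proof -
  have "n = (\<Prod>p\<in>prime_factors n. p ^ multiplicity p n)"
    using assms by (intro prime_factorization_nat) simp
  hence "real n = (\<Prod>p\<in>prime_factors n. real (p ^ multiplicity p n))" 
    by (metis of_nat_prod)
  hence "ln (real n) = ln (\<Prod>p\<in>prime_factors n. real (p ^ multiplicity p n))" by simp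
  also have "\<dots> = (\<Sum>p\<in>prime_factors n. ln (real (p ^ multiplicity p n)))"
    by (rule ln_prod) (auto simp: prime_gt_0_nat in_prime_factors_iff)
  finally show ?thesis .
qed

lemma mult_split:
  fixes n p :: nat assumes mult: "multiplicative g" and "n > 0" and "prime p"
  shows "g n = g (p ^ multiplicity p n) * g (n div p ^ multiplicity p n)"
proof -
  let ?q = "p ^ multiplicity p n"
  have d: "?q dvd n" by (rule multiplicity_dvd)
  have n: "n = ?q * (n div ?q)" using d by simp
  have nd: "\<not> p dvd (n div ?q)" using assms(2,3) by (intro multiplicity_decompose) auto
  have "n \<noteq> 0" using assms(2) by simp
  have "coprime p (n div ?q)" using assms(3) nd by (simp add: prime_imp_coprime)
  hence cop: "coprime ?q (n div ?q)" by simp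
  have pos1: "?q > 0" using assms(3) prime_gt_0_nat by simp
  have pos2: "n div ?q > 0" using n assms(2) by (metis gr0I mult_0_right)
  have "g n = g (?q * (n div ?q))" using n by simp
  also have "\<dots> = g ?q * g (n div ?q)" using mult pos1 pos2 cop unfolding multiplicative_def by blast
  finally show ?thesis .
qed



lemma dyadic:
  fixes h :: "nat \<Rightarrow> real" and P :: "nat \<Rightarrow> bool"
  assumes h: "\<And>q. 0 \<le> h q"
    and H: "\<And>y. y > 0 \<Longrightarrow> (\<Sum>q\<in>{q. P q \<and> real q \<le> y}. h q) \<le> C * y"
    and fin: "\<And>y. finite {q. P q \<and> real q \<le> y}"
  shows "a > 0 \<Longrightarrow> b \<le> 2^k * a \<Longrightarrow>
     (\<Sum>q\<in>{q. P q \<and> a < real q \<and> real q \<le> b}. h q / real q) \<le> 2*C*k"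
proof (induction k arbitrary: a)
  case 0
  then have "{q. P q \<and> a < real q \<and> real q \<le> b} = {}" by auto
  then show ?case by (simp only:) simp
next
  case (Suc k)
  let ?A = "{q. P q \<and> a < real q \<and> real q \<le> 2*a}"
  let ?B = "{q. P q \<and> 2*a < real q \<and> real q \<le> b}"
  have fA: "finite ?A" by (rule finite_subset[OF _ fin[of "2*a"]]) auto
  have fB: "finite ?B" by (rule finite_subset[OF _ fin[of "b"]]) auto
  have nn: "\<And>q. 0 \<le> h q / real q" using h by simp
  have "(\<Sum>q\<in>{q. P q \<and> a < real q \<and> real q \<le> b}. h q / real q) \<le> (\<Sum>q\<in>?A \<union> ?B. h q / real q)"
    by (rule sum_mono2) (use fA fB nn in auto)
  also have "\<dots> = (\<Sum>q\<in>?A. h q / real q) + (\<Sum>q\<in>?B. h q / real q)"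
    by (rule sum.union_disjoint) (use fA fB in auto)
  also have "(\<Sum>q\<in>?A. h q / real q) \<le> (\<Sum>q\<in>?A. h q / a)"
  proof (rule sum_mono)
    fix q assume "q \<in> ?A"
    then have "a \<le> real q" by auto
    then show "h q / real q \<le> h q / a" using Suc.prems h[of q] by (intro divide_left_mono) auto
  qed
  also have "\<dots> = (\<Sum>q\<in>?A. h q) / a" by (simp add: sum_divide_distrib)
  also have "(\<Sum>q\<in>?A. h q) \<le> (\<Sum>q\<in>{q. P q \<and> real q \<le> 2*a}. h q)"
    by (rule sum_mono2) (use fin h in auto)
  also have "\<dots> \<le> C * (2*a)" using H[of "2*a"] Suc.prems by simp
  also have "(\<Sum>q\<in>?B. h q / real q) \<le> 2*C*k"
    using Suc.IH[of "2*a"] Suc.prems by (simp add: mult_ac)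
  finally show ?case using Suc.prems by (simp add: divide_right_mono field_simps)
qed



lemma dyadic2:
  fixes h :: "nat \<Rightarrow> real" and P :: "nat \<Rightarrow> bool"
  assumes h: "\<And>q. 0 \<le> h q"
    and H: "\<And>y. y > 0 \<Longrightarrow> (\<Sum>q\<in>{q. P q \<and> real q \<le> y}. h q) \<le> C * y"
    and fin: "\<And>y. finite {q. P q \<and> real q \<le> y}"
    and C: "C \<ge> 0" and a: "a > 0" and ab: "a \<le> b"
  shows "(\<Sum>q\<in>{q. P q \<and> a < real q \<and> real q \<le> b}. h q / real q) \<le> 2*C*(ln (b/a) / ln 2 + 1)"
proof -
  define k where "k = nat \<lceil>log 2 (b/a)\<rceil>"
  have ba: "b/a \<ge> 1" using a ab by simp
  have l0: "log 2 (b/a) \<ge> 0" using ba by simp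
  have kge: "real k \<ge> log 2 (b/a)" unfolding k_def by linarith
  have kle: "real k \<le> log 2 (b/a) + 1" unfolding k_def using l0 by linarith
  have "b/a = 2 powr (log 2 (b/a))" using ba by simp
  also have "\<dots> \<le> 2 powr (real k)" using kge by (intro powr_mono) auto
  also have "\<dots> = 2 ^ k" by (simp add: powr_realpow)
  finally have "b \<le> 2^k * a" using a by (simp add: field_simps)
  hence "(\<Sum>q\<in>{q. P q \<and> a < real q \<and> real q \<le> b}. h q / real q) \<le> 2*C*k"
    using dyadic[of h P C, OF h H fin a] by blast
  also have "\<dots> \<le> 2*C*(log 2 (b/a) + 1)" using kle C by (intro mult_left_mono) auto
  also have "log 2 (b/a) = ln (b/a) / ln 2" by (simp add: log_def)
  finally show ?thesis .
qed



lemma fin_le: "finite {n::nat. P n \<and> real n \<le> y}"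
proof (rule finite_subset[of _ "{..nat \<lceil>y\<rceil>}"])
  show "{n::nat. P n \<and> real n \<le> y} \<subseteq> {..nat \<lceil>y\<rceil>}"
  proof
    fix n assume "n \<in> {n::nat. P n \<and> real n \<le> y}"
    hence "real n \<le> y" by simp
    hence "int n \<le> \<lceil>y\<rceil>" by linarith
    thus "n \<in> {..nat \<lceil>y\<rceil>}" by simp
  qed
qed simp

lemma fin_le2: "finite {n::nat. P n \<and> Q n \<and> real n \<le> y}"
  using fin_le[of "\<lambda>n. P n \<and> Q n" y] by (simp add: conj_assoc)

lemma ln_nat_nonneg: "0 \<le> ln (real (n::nat))"
  by (cases n) auto

lemma key:
  fixes g :: "nat \<Rightarrow> real"
  assumes mult: "multiplicative g" and nonneg: "\<And>n. g n \<ge> 0"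
    and H: "\<And>y. y > 0 \<Longrightarrow> (\<Sum>q\<in>{q. primepow q \<and> real q \<le> y}. g q * ln (real q)) \<le> C * y"
    and C: "C \<ge> 0" and u: "u > 0" and uv: "u \<le> v"
  shows "(\<Sum>n\<in>{n::nat. u < real n \<and> real n \<le> v}. g n * ln (real n) / real n)
     \<le> 2*C*(ln (v/u) / ln 2 + 1) * (\<Sum>n\<in>{n::nat. 1 \<le> n \<and> real n \<le> v}. g n / real n)"
proof -
  define N where "N = {n::nat. u < real n \<and> real n \<le> v}"
  define M where "M = {m::nat. 1 \<le> m \<and> real m \<le> v}"
  define Q where "Q = (\<lambda>m::nat. {q::nat. primepow q \<and> u / real m < real q \<and> real q \<le> v / real m})"
  define F where "F = (\<lambda>(m::nat, q::nat). (g m / real m) * (g q * ln (real q) / real q))"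
  define \<phi> where "\<phi> = (\<lambda>(n::nat, p::nat). (n div p ^ multiplicity p n, p ^ multiplicity p n))"
  define B where "B = 2*C*(ln (v/u) / ln 2 + 1)"
  have finN: "finite N" unfolding N_def by (rule fin_le)
  have finM: "finite M" unfolding M_def by (rule fin_le)
  have finQ: "\<And>m. finite (Q m)" unfolding Q_def by (rule fin_le2)
  have Npos: "\<And>n. n \<in> N \<Longrightarrow> n > 0" unfolding N_def using u by (auto intro!: gr0I)
  have Fnn: "\<And>x. F x \<ge> 0" unfolding F_def using nonneg ln_nat_nonneg
    by (auto intro!: mult_nonneg_nonneg divide_nonneg_nonneg)
  have step1: "\<And>n. n \<in> N \<Longrightarrow> g n * ln (real n) / real n = (\<Sum>p\<in>prime_factors n. F (\<phi> (n, p)))"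
  proof -
    fix n assume n: "n \<in> N"
    have n0: "n > 0" using Npos n by blast
    have "g n * ln (real n) / real n = (\<Sum>p\<in>prime_factors n. g n * ln (real (p ^ multiplicity p n)) / real n)"
      by (simp add: ln_decomp[OF n0] sum_distrib_left sum_divide_distrib)
    also have "\<dots> = (\<Sum>p\<in>prime_factors n. F (\<phi> (n, p)))"
    proof (rule sum.cong[OF refl])
      fix p assume p: "p \<in> prime_factors n"
      hence pp: "prime p" by auto
      let ?q = "p ^ multiplicity p n"
      have d: "?q dvd n" by (rule multiplicity_dvd)
      have nq: "real n = real ?q * real (n div ?q)" using d by (metis dvd_mult_div_cancel of_nat_mult)
      have q0: "real ?q > 0" using pp prime_gt_0_nat by simp
      have m0: "real (n div ?q) > 0" using nq n0 q0
        by (metis mult_eq_0_iff not_gr0 of_nat_0_less_iff of_nat_eq_0_iff)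
      show "g n * ln (real ?q) / real n = F (\<phi> (n, p))"
        unfolding F_def \<phi>_def using mult_split[OF mult n0 pp] nq q0 m0
        by (simp add: field_simps)
    qed
    finally show "g n * ln (real n) / real n = (\<Sum>p\<in>prime_factors n. F (\<phi> (n, p)))" .
  qed
  have "(\<Sum>n\<in>N. g n * ln (real n) / real n) = (\<Sum>n\<in>N. \<Sum>p\<in>prime_factors n. F (\<phi> (n, p)))"
    using step1 by (rule sum.cong[OF refl])
  also have "\<dots> = (\<Sum>x\<in>Sigma N prime_factors. F (\<phi> x))"
    using sum.Sigma[OF finN, of prime_factors "\<lambda>n p. F (\<phi> (n,p))"] by (simp add: case_prod_unfold)
  also have "\<dots> = (\<Sum>x\<in>\<phi> ` Sigma N prime_factors. F x)"
  proof (rule sum.reindex[symmetric, unfolded comp_def])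
    show "inj_on \<phi> (Sigma N prime_factors)"
    proof (rule inj_onI, clarify)
      fix n p n' p' assume a: "n \<in> N" "p \<in> prime_factors n" "n' \<in> N" "p' \<in> prime_factors n'"
        and e: "\<phi> (n, p) = \<phi> (n', p')"
      have e1: "p ^ multiplicity p n = p' ^ multiplicity p' n'" and
           e2: "n div p ^ multiplicity p n = n' div p' ^ multiplicity p' n'"
        using e unfolding \<phi>_def by auto
      have pp: "prime p" "prime p'" using a by auto
      have k: "multiplicity p n > 0" "multiplicity p' n'> 0" using a Npos
        by (auto simp: prime_factors_multiplicity)
      have "p = p'" using prime_power_inj'(1)[OF pp e1 k] .
      moreover have "n = n'"
        using e1 e2 multiplicity_dvd[of p n] multiplicity_dvd[of p' n']
        by (metis dvd_mult_div_cancel)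
      ultimately show "n = n' \<and> p = p'" by simp
    qed
  qed
  also have "\<dots> \<le> (\<Sum>x\<in>Sigma M Q. F x)"
  proof (rule sum_mono2)
    show "finite (Sigma M Q)" using finM finQ by auto
    have mem: "\<phi> (n, p) \<in> Sigma M Q" if n: "n \<in> N" and p: "p \<in> prime_factors n" for n p
    proof -
      have n0: "n > 0" using Npos n by blast
      have pp: "prime p" using p by auto
      have k: "multiplicity p n > 0" using p n0 by (auto simp: prime_factors_multiplicity)
      let ?q = "p ^ multiplicity p n"
      let ?m = "n div ?q"
      have d: "?q dvd n" by (rule multiplicity_dvd)
      have nq: "real n = real ?q * real ?m" using d by (metis dvd_mult_div_cancel of_nat_mult)
      have q0: "real ?q > 0" using pp prime_gt_0_nat by simp
      have m0: "real ?m > 0" using nq n0 q0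
        by (metis mult_eq_0_iff not_gr0 of_nat_0_less_iff of_nat_eq_0_iff)
      have mle: "real ?m \<le> real n" by simp
      have ppq: "primepow ?q" using pp k by (auto simp: primepow_def)
      have "u < real n" "real n \<le> v" using n unfolding N_def by auto
      hence "u / real ?m < real ?q" "real ?q \<le> v / real ?m" using nq m0 q0
        by (simp_all add: field_simps)
      moreover have "1 \<le> ?m" using m0 by simp
      moreover have "real ?m \<le> v" using mle \<open>real n \<le> v\<close> by linarith
      ultimately show "\<phi> (n, p) \<in> Sigma M Q" unfolding \<phi>_def M_def Q_def using ppq by auto
    qed
    show "\<phi> ` Sigma N prime_factors \<subseteq> Sigma M Q"
    proof (rule image_subsetI)
      fix x assume "x \<in> Sigma N prime_factors"
      then obtain n p where "x = (n, p)" "n \<in> N" "p \<in> prime_factors n" by blast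
      then show "\<phi> x \<in> Sigma M Q" using mem by simp
    qed
  qed (use Fnn in auto)
  also have "\<dots> = (\<Sum>m\<in>M. \<Sum>q\<in>Q m. F (m, q))"
    using sum.Sigma[OF finM, of Q "\<lambda>m q. F (m,q)"] finQ by (simp add: case_prod_unfold)
  also have "\<dots> = (\<Sum>m\<in>M. (g m / real m) * (\<Sum>q\<in>Q m. g q * ln (real q) / real q))"
    unfolding F_def by (simp add: sum_distrib_left)
  also have "\<dots> \<le> (\<Sum>m\<in>M. (g m / real m) * B)"
  proof (rule sum_mono, rule mult_left_mono)
    fix m assume m: "m \<in> M"
    hence m0: "real m > 0" unfolding M_def by auto
    have "(\<Sum>q\<in>Q m. g q * ln (real q) / real q) \<le> 2*C*(ln ((v / real m)/(u / real m)) / ln 2 + 1)"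
      unfolding Q_def
      by (rule dyadic2[where h = "\<lambda>q. g q * ln (real q)"])
         (use nonneg ln_nat_nonneg H C u uv m0 fin_le in \<open>auto intro!: mult_nonneg_nonneg divide_right_mono simp: primepow_gt_0_nat\<close>)
    also have "(v / real m)/(u / real m) = v / u" using m0 by simp
    finally show "(\<Sum>q\<in>Q m. g q * ln (real q) / real q) \<le> B" unfolding B_def .
    show "0 \<le> g m / real m" using nonneg by simp
  qed
  also have "\<dots> = B * (\<Sum>m\<in>M. g m / real m)" by (simp add: sum_distrib_left mult_ac)
  finally show ?thesis unfolding N_def M_def B_def .
qed



definition Sg :: "(nat \<Rightarrow> real) \<Rightarrow> real \<Rightarrow> real" where
  "Sg g y = (\<Sum>n\<in>{n::nat. 1 \<le> n \<and> real n \<le> y}. g n / real n)"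
definition Dg :: "(nat \<Rightarrow> real) \<Rightarrow> real \<Rightarrow> real \<Rightarrow> real" where
  "Dg g u v = (\<Sum>n\<in>{n::nat. u < real n \<and> real n \<le> v}. g n / real n)"

lemma fin1 [simp]: "finite {n::nat. Suc 0 \<le> n \<and> real n \<le> y}" "finite {n::nat. u < real n \<and> real n \<le> y}"
  by (rule fin_le)+

lemma Sg_nonneg: "(\<And>n. g n \<ge> 0) \<Longrightarrow> Sg g y \<ge> 0"
  unfolding Sg_def by (intro sum_nonneg) auto

lemma Dg_nonneg: "(\<And>n. g n \<ge> 0) \<Longrightarrow> Dg g u v \<ge> 0"
  unfolding Dg_def by (intro sum_nonneg) auto

lemma Sg_mono: "(\<And>n. g n \<ge> 0) \<Longrightarrow> y \<le> z \<Longrightarrow> Sg g y \<le> Sg g z"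
  unfolding Sg_def by (rule sum_mono2) (auto intro: fin_le2)

lemma Sg_ge1: "multiplicative g \<Longrightarrow> (\<And>n. g n \<ge> 0) \<Longrightarrow> y \<ge> 1 \<Longrightarrow> Sg g y \<ge> 1"
proof -
  assume m: "multiplicative g" and nn: "\<And>n. g n \<ge> 0" and y: "y \<ge> 1"
  have "(\<Sum>n\<in>{1::nat}. g n / real n) \<le> Sg g y"
    unfolding Sg_def by (rule sum_mono2) (use y nn in \<open>auto intro: fin_le2\<close>)
  thus ?thesis using m by (simp add: multiplicative_def)
qed

lemma Dg_le_Sg: "(\<And>n. g n \<ge> 0) \<Longrightarrow> u \<ge> 0 \<Longrightarrow> Dg g u v \<le> Sg g v"
  unfolding Dg_def Sg_def by (rule sum_mono2) (auto intro: fin_le2)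

lemma Sg_split: "u \<ge> 0 \<Longrightarrow> u \<le> v \<Longrightarrow> Sg g v = Sg g u + Dg g u v"
proof -
  assume u: "u \<ge> 0" "u \<le> v"
  have e: "{n::nat. 1 \<le> n \<and> real n \<le> v} = {n::nat. 1 \<le> n \<and> real n \<le> u} \<union> {n::nat. u < real n \<and> real n \<le> v}"
    using u by auto
  show ?thesis unfolding Sg_def Dg_def e
    by (rule sum.union_disjoint) (auto intro: fin_le2 fin_le)
qed

lemma Dg_bound:
  fixes g :: "nat \<Rightarrow> real"
  assumes mult: "multiplicative g" and nonneg: "\<And>n. g n \<ge> 0"
    and H: "\<And>y. y > 0 \<Longrightarrow> (\<Sum>q\<in>{q. primepow q \<and> real q \<le> y}. g q * ln (real q)) \<le> C * y"
    and C: "C \<ge> 0" and u: "u > 1" and uv: "u \<le> v"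
  shows "Dg g u v \<le> (2*C/ln 2) * (ln v - ln u + 1) / ln u * Sg g v"
proof -
  have lu: "ln u > 0" using u by simp
  have "Dg g u v * ln u = (\<Sum>n\<in>{n::nat. u < real n \<and> real n \<le> v}. g n * ln u / real n)"
    unfolding Dg_def by (simp add: sum_distrib_right)
  also have "\<dots> \<le> (\<Sum>n\<in>{n::nat. u < real n \<and> real n \<le> v}. g n * ln (real n) / real n)"
  proof (rule sum_mono)
    fix n assume n: "n \<in> {n::nat. u < real n \<and> real n \<le> v}"
    hence "ln u \<le> ln (real n)" using u by auto
    thus "g n * ln u / real n \<le> g n * ln (real n) / real n"
      using nonneg[of n] by (intro divide_right_mono mult_left_mono) auto
  qed
  also have "\<dots> \<le> 2*C*(ln (v/u) / ln 2 + 1) * Sg g v"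
    unfolding Sg_def by (rule key[OF mult nonneg H C]) (use u uv in auto)
  also have "\<dots> \<le> (2*C/ln 2) * (ln v - ln u + 1) * Sg g v"
  proof (rule mult_right_mono)
    have l2: "0 < ln (2::real)" "ln (2::real) \<le> 1" using ln_le_minus_one[of 2] by auto
    have lvu: "ln (v/u) = ln v - ln u" using u uv by (simp add: ln_div)
    have "ln v - ln u \<ge> 0" using u uv by simp
    hence "(ln v - ln u) / ln 2 + 1 \<le> (ln v - ln u + 1) / ln 2" using l2 by (simp add: field_simps)
    thus "2*C*(ln (v/u) / ln 2 + 1) \<le> (2*C/ln 2) * (ln v - ln u + 1)"
      using C lvu by (simp add: mult_left_mono) (smt (verit) mult_left_mono times_divide_eq_right)
    show "0 \<le> Sg g v" using Sg_nonneg nonneg by blast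
  qed
  finally show ?thesis using lu by (simp add: field_simps)
qed



lemma doubling:
  fixes g :: "nat \<Rightarrow> real"
  assumes mult: "multiplicative g" and nonneg: "\<And>n. g n \<ge> 0"
    and H: "\<And>y. y > 0 \<Longrightarrow> (\<Sum>q\<in>{q. primepow q \<and> real q \<le> y}. g q * ln (real q)) \<le> C * y"
    and C: "C > 0" and w1: "w > 1"
    and w: "ln w \<ge> 4 * (2*C/ln 2)" and wv: "w \<le> v"
    and lv: "ln v \<le> (1 + 1 / (4 * (2*C/ln 2))) * ln w"
  shows "Sg g v \<le> 2 * Sg g w"
proof -
  define M where "M = 2*C/ln 2"
  have M: "M > 0" unfolding M_def using C by simp
  have lw: "ln w > 0" using w1 by simp
  have sp: "Sg g v = Sg g w + Dg g w v" using w1 wv by (intro Sg_split) auto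
  have db: "Dg g w v \<le> M * (ln v - ln w + 1) / ln w * Sg g v"
    unfolding M_def by (rule Dg_bound[OF mult nonneg H]) (use C w1 wv in auto)
  have half: "M * (ln v - ln w + 1) / ln w \<le> 1/2"
  proof -
    have "ln v - ln w \<le> ln w / (4*M)" using lv M unfolding M_def by (simp add: algebra_simps)
    hence "M * (ln v - ln w) \<le> ln w / 4" using M by (simp add: field_simps)
    moreover have "M \<le> ln w / 4" using w unfolding M_def by simp
    ultimately have "M * (ln v - ln w + 1) \<le> ln w / 2" by (simp add: algebra_simps)
    thus ?thesis using lw by (simp add: field_simps)
  qed
  have s0: "Sg g v \<ge> 0" using Sg_nonneg nonneg by blast
  have "M * (ln v - ln w + 1) / ln w * Sg g v \<le> 1/2 * Sg g v"
    using half s0 by (rule mult_right_mono)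
  thus ?thesis using sp db by linarith
qed



lemma chain:
  fixes g :: "nat \<Rightarrow> real"
  assumes mult: "multiplicative g" and nonneg: "\<And>n. g n \<ge> 0"
    and H: "\<And>y. y > 0 \<Longrightarrow> (\<Sum>q\<in>{q. primepow q \<and> real q \<le> y}. g q * ln (real q)) \<le> C * y"
    and C: "C > 0" and x1: "x > 1"
    and x: "ln x \<ge> 4 * (2*C/ln 2)"
  shows "x \<le> v \<Longrightarrow> ln v \<le> (1 + 1 / (4 * (2*C/ln 2))) ^ k * ln x \<Longrightarrow> Sg g v \<le> 2 ^ k * Sg g x"
proof (induction k arbitrary: v)
  case 0
  then have "ln v \<le> ln x" by simp
  hence "v \<le> x" using x1 0 by simp
  hence "v = x" using 0 by simp
  thus ?case by simp
next
  case (Suc k)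
  define d where "d = 1 / (4 * (2*C/ln 2))"
  have d: "d > 0" unfolding d_def using C by simp
  have v1: "v > 1" using Suc.prems x1 by simp
  have lv: "ln v > 0" using v1 by simp
  have lx: "ln x > 0" using x1 by simp
  define e where "e = exp (ln v / (1 + d))"
  define w where "w = max x e"
  have e0: "e > 0" unfolding e_def by simp
  have le: "ln e = ln v / (1 + d)" unfolding e_def by simp
  have ev: "e \<le> v"
  proof -
    have "ln v / (1 + d) \<le> ln v" using lv d by (simp add: field_simps)
    thus ?thesis unfolding e_def using v1 by (metis exp_le_cancel_iff exp_ln less_trans zero_less_one)
  qed
  have wv: "w \<le> v" unfolding w_def using ev Suc.prems by simp
  have w1: "w > 1" unfolding w_def using x1 by simp
  have pk: "(1 + d) ^ k \<ge> 1" using d by simp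
  have "ln w \<ge> ln x" unfolding w_def using x1 by simp
  hence lw: "ln w \<ge> 4 * (2*C/ln 2)" using x by simp
  have lvw: "ln v \<le> (1 + d) * ln w"
  proof -
    have "ln e \<le> ln w" unfolding w_def using e0 x1 by simp
    thus ?thesis using le d by (simp add: field_simps)
  qed
  have lwk: "ln w \<le> (1 + d) ^ k * ln x"
  proof (cases "e \<le> x")
    case True
    hence "w = x" unfolding w_def by simp
    thus ?thesis using pk lx by simp
  next
    case False
    hence "w = e" unfolding w_def by simp
    hence "ln w = ln v / (1 + d)" using le by simp
    also have "\<dots> \<le> (1 + d) ^ k * ln x" using Suc.prems(2) d unfolding d_def[symmetric]
      by (simp add: field_simps)
    finally show ?thesis .
  qed
  have "Sg g v \<le> 2 * Sg g w"
    using doubling[OF mult nonneg H C w1 lw wv] lvw unfolding d_def by blast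
  also have "Sg g w \<le> 2 ^ k * Sg g x"
    using Suc.IH[of w] wv lwk unfolding w_def d_def by simp
  finally show ?case by simp
qed



lemma r_ln: fixes r :: real assumes "1 \<le> r" "r \<le> 3" shows "r - 1 \<le> 3 * ln r"
proof -
  have "ln (1/r) \<le> 1/r - 1" using assms by (intro ln_le_minus_one) auto
  hence a: "1 - 1/r \<le> ln r" using assms by (simp add: ln_div)
  have "(r - 1) / 3 \<le> (r - 1) / r" using assms by (intro divide_left_mono) auto
  also have "(r-1)/r = 1 - 1/r" using assms by (simp add: field_simps)
  finally have "(r - 1) / 3 \<le> ln r" using a by linarith
  thus ?thesis by simp
qed

theorem lemma3:
  fixes g :: "nat \<Rightarrow> real"
  assumes mult: "multiplicative g"
    and nonneg: "\<And>n. g n \<ge> 0"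
    and bdd_primes: "\<exists>B. \<forall>p. prime p \<longrightarrow> g p \<le> B"
    and higher_pp: "summable (\<lambda>q. if (\<exists>p k. prime p \<and> k \<ge> 2 \<and> q = p ^ k)
                                      then g q / real q else 0)"
    and chebyshev: "\<exists>C. \<forall>y::real. y \<ge> 2 \<longrightarrow>
              (1 / y) * (\<Sum>q\<in>{q::nat. primepow q \<and> real q \<le> y}. g q * ln (real q)) \<le> C"
  shows "\<exists>K. \<forall>x u v :: real. x \<ge> 2 \<and> sqrt x \<le> u \<and> u \<le> v \<and> v \<le> x powr (3/2) \<longrightarrow>
            \<bar>\<Sum>n\<in>{n::nat. u < real n \<and> real n \<le> v}. g n / real n\<bar>
              \<le> K * (ln (ln v / ln u) + 1 / ln x) *
                  (\<Sum>n\<in>{n::nat. 1 \<le> n \<and> real n \<le> x}. g n / real n)"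
proof -
  obtain C0 where C0: "\<And>y::real. y \<ge> 2 \<Longrightarrow>
      (1 / y) * (\<Sum>q\<in>{q::nat. primepow q \<and> real q \<le> y}. g q * ln (real q)) \<le> C0"
    using chebyshev by blast
  define C where "C = max C0 0 + 1"
  have C: "C > 0" unfolding C_def by simp
  have H: "(\<Sum>q\<in>{q. primepow q \<and> real q \<le> y}. g q * ln (real q)) \<le> C * y" if y: "y > 0" for y
  proof (cases "y < 2")
    case True
    have E: "{q::nat. primepow q \<and> real q \<le> y} = {}"
    proof -
      { fix q :: nat assume "primepow q" "real q \<le> y"
        hence "q > Suc 0" "real q < 2" using True primepow_gt_Suc_0 by auto
        hence False by linarith }
      thus ?thesis by auto
    qed
    show ?thesis unfolding E using C y by simp
  next
    case False
    hence "(1 / y) * (\<Sum>q\<in>{q::nat. primepow q \<and> real q \<le> y}. g q * ln (real q)) \<le> C0"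
      using C0 by simp
    hence "(\<Sum>q\<in>{q::nat. primepow q \<and> real q \<le> y}. g q * ln (real q)) \<le> C0 * y"
      using y by (simp add: field_simps)
    also have "\<dots> \<le> C * y" using y unfolding C_def by (intro mult_right_mono) auto
    finally show ?thesis .
  qed
  define M where "M = 2*C/ln 2"
  have M: "M > 0" unfolding M_def using C by simp
  define d where "d = 1 / (4 * M)"
  have d: "d > 0" unfolding d_def using M by simp
  obtain N where N: "3/2 < (1 + d) ^ N" using real_arch_pow[of "1 + d" "3/2"] d by auto
  define X0 where "X0 = exp (4 * M)"
  define Q where "Q = Sg g (X0 powr (3/2))"
  have Q0: "Q \<ge> 0" unfolding Q_def using Sg_nonneg nonneg by blast
  define K where "K = max (3 * M * 2 ^ N) (4 * M * Q)"
  show ?thesis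
  proof (rule exI[of _ K], intro allI impI, elim conjE)
    fix x u v :: real
    assume x2: "x \<ge> 2" and ux: "sqrt x \<le> u" and uv: "u \<le> v" and vx: "v \<le> x powr (3/2)"
    let ?L = "ln (ln v / ln u)"
    have s2: "sqrt x \<ge> sqrt 2" using x2 by simp
    have "sqrt (2::real) > 1" by simp
    hence u1: "u > 1" using s2 ux by linarith
    have lu: "ln u > 0" using u1 by simp
    have luv: "ln u \<le> ln v" using u1 uv by simp
    have L0: "?L \<ge> 0" using lu luv by simp
    have lx: "ln x > 0" using x2 by simp
    have Sx: "Sg g x \<ge> 1" using Sg_ge1[OF mult nonneg] x2 by simp
    have D0: "Dg g u v \<ge> 0" using Dg_nonneg nonneg by blast
    have "\<bar>Dg g u v\<bar> \<le> K * (?L + 1 / ln x) * Sg g x"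
    proof (cases "ln x < 4 * M")
      case True
      have "exp (ln x) \<le> exp (4 * M)" using True by simp
      hence xX: "x \<le> X0" unfolding X0_def using x2 by simp
      have "x powr (3/2) \<le> X0 powr (3/2)" using xX x2 by (intro powr_mono2) auto
      hence "v \<le> X0 powr (3/2)" using vx by linarith
      hence "Sg g v \<le> Q" unfolding Q_def using Sg_mono[of g] nonneg by blast
      moreover have "Dg g u v \<le> Sg g v" using Dg_le_Sg[of g u v] nonneg u1 by simp
      ultimately have "Dg g u v \<le> Q" by linarith
      also have "Q \<le> 4 * M * Q / ln x"
      proof -
        have "Q * ln x \<le> Q * (4 * M)" using True Q0 by (intro mult_left_mono) auto
        thus ?thesis using lx by (simp add: field_simps)
      qed
      also have "\<dots> \<le> K / ln x" unfolding K_def using lx by (intro divide_right_mono) auto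
      also have "\<dots> = K * (1 / ln x) * 1" by simp
      also have "\<dots> \<le> K * (?L + 1 / ln x) * Sg g x"
      proof (rule mult_mono)
        have "3 * M * 2 ^ N \<ge> 0" using M by simp
        hence K0: "K \<ge> 0" unfolding K_def by linarith
        show "K * (1 / ln x) \<le> K * (?L + 1 / ln x)" using K0 L0 by (intro mult_left_mono) auto
        show "0 \<le> K * (?L + 1 / ln x)" using K0 L0 lx by simp
      qed (use Sx in auto)
      finally show ?thesis using D0 by simp
    next
      case False
      hence lxM: "ln x \<ge> 4 * M" by simp
      have v0: "v > 0" using u1 uv by simp
      have lv: "ln v \<le> 3/2 * ln x"
      proof -
        have "ln v \<le> ln (x powr (3/2))" using vx v0 by (subst ln_le_cancel_iff) auto
        thus ?thesis using x2 by (simp add: ln_powr)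
      qed
      have lu2: "ln u \<ge> ln x / 2"
      proof -
        have "ln (sqrt x) \<le> ln u" using ux x2 u1 by (subst ln_le_cancel_iff) auto
        thus ?thesis using x2 by (simp add: ln_sqrt)
      qed
      have SvSx: "Sg g v \<le> 2 ^ N * Sg g x"
      proof (cases "v \<le> x")
        case True
        hence "Sg g v \<le> Sg g x" using Sg_mono[of g v x] nonneg by blast
        also have "\<dots> \<le> 2 ^ N * Sg g x"
        proof -
          have "(1::real) \<le> 2 ^ N" by simp
          hence "1 * Sg g x \<le> 2 ^ N * Sg g x" using Sx by (intro mult_right_mono) auto
          thus ?thesis by simp
        qed
        finally show ?thesis .
      next
        case False
        have "3/2 * ln x \<le> (1 + d) ^ N * ln x" using N lx by (intro mult_right_mono) auto
        hence lvN: "ln v \<le> (1 + d) ^ N * ln x" using lv by linarith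
        have x1: "x > 1" using x2 by simp
        have lxM': "ln x \<ge> 4 * (2*C/ln 2)" using lxM unfolding M_def .
        show ?thesis
        proof (rule chain[OF mult nonneg H C x1 lxM'])
          show "x \<le> v" using False by simp
          show "ln v \<le> (1 + 1 / (4 * (2 * C / ln 2))) ^ N * ln x" using lvN unfolding d_def M_def .
        qed
      qed
      define r where "r = ln v / ln u"
      have r1: "1 \<le> r" unfolding r_def using lu luv by simp
      have "ln v \<le> 3 * ln u" using lv lu2 by linarith
      hence r3: "r \<le> 3" unfolding r_def using lu by (simp add: pos_divide_le_eq)
      have Db: "Dg g u v \<le> M * (ln v - ln u + 1) / ln u * Sg g v"
        unfolding M_def by (rule Dg_bound[OF mult nonneg H]) (use C u1 uv in auto)
      have e1: "(ln v - ln u + 1) / ln u = (r - 1) + 1 / ln u"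
        unfolding r_def using lu by (simp add: diff_divide_distrib add_divide_distrib)
      have rL: "r - 1 \<le> 3 * ?L" using r_ln[OF r1 r3] unfolding r_def .
      have "1 / ln u \<le> 2 / ln x" using lu2 lx lu by (simp add: field_simps)
      moreover have "2 / ln x \<le> 3 / ln x" using lx by (simp add: divide_right_mono)
      ultimately have "(r - 1) + 1 / ln u \<le> 3 * (?L + 1 / ln x)" using rL by simp
      hence co: "M * (ln v - ln u + 1) / ln u \<le> 3 * M * (?L + 1 / ln x)"
        using M e1 by (metis (no_types, lifting) mult.assoc mult_left_mono less_imp_le times_divide_eq_right mult.left_commute)
      have Sv0: "Sg g v \<ge> 0" using Sg_nonneg nonneg by blast
      have "M * (ln v - ln u + 1) / ln u * Sg g v \<le> 3 * M * (?L + 1 / ln x) * Sg g v"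
        using co Sv0 by (rule mult_right_mono)
      with Db have "Dg g u v \<le> 3 * M * (?L + 1 / ln x) * Sg g v" by linarith
      also have "\<dots> \<le> 3 * M * (?L + 1 / ln x) * (2 ^ N * Sg g x)"
        using SvSx M L0 lx by (intro mult_left_mono) auto
      also have "\<dots> = (3 * M * 2 ^ N) * (?L + 1 / ln x) * Sg g x" by simp
      also have "\<dots> \<le> K * (?L + 1 / ln x) * Sg g x"
        unfolding K_def using L0 lx Sx by (intro mult_right_mono) auto
      finally show ?thesis using D0 by simp
    qed
    thus "\<bar>\<Sum>n\<in>{n::nat. u < real n \<and> real n \<le> v}. g n / real n\<bar>
              \<le> K * (ln (ln v / ln u) + 1 / ln x) *
                  (\<Sum>n\<in>{n::nat. 1 \<le> n \<and> real n \<le> x}. g n / real n)"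
      unfolding Dg_def Sg_def .
  qed
qed

end
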